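(* Let $f$, $X_n$, $X$, $Y$ be as in the context and let $n\geq 2$ (equivalently $f(n)\geq 2$). Every finite subgraph $\Gamma$ of $X$ with $|V\Gamma|\leq |VX_n|=(2^{2^{2n}}f(n)+1)f(n)$ admits a coarse $f(n)$-wiring into $Y$ of volume at most $2|VX_n|$. Hence \[ \mathrm{wir}^{f(n)}_{X\to Y}\big(|VX_n|\big)\leq 2|VX_n|. \]
   Context: Fix a function $f:\mathbb{N}\to\mathbb{N}$ (with $\mathbb{N}=\{1,2,\dots\}$) that is surjective, satisfies $f(1)=1$, $2\leq f(n)\leq n$ for all $n\geq 2$, and $|f^{-1}(k)|=\infty$ for every $k\geq 2$. For $n\in\mathbb{N}$ let $X_n$ be the graph with vertex set $\{0,1,\dots,f(n)-1\}\times\{0,1,\dots,2^{2^{2n}}f(n)\}$, with edges $(i,j)(i,j+1)$ for all $0\leq i\leq f(n)-1$, $0\leq j\leq 2^{2^{2n}}f(n)-1$, and $(i,j)(i+1,j)$ for all $0\leq i\leq f(n)-2$ and all $j$ that are multiples of $2^{2^{2n}}$. Let $Y_n$ be defined in the same way with $2^{2^{2n}}$ replaced everywhere by $2^{2^{2n+1}}$. Let $X=\bigsqcup_{n\geq1}X_n$ and $Y=\bigsqcup_{n\geq 1}Y_n$ (disjoint unions). A wiring of a finite graph $\Gamma$ into a graph $Y$ is a continuous map $g:\Gamma\to Y$ sending vertices to vertices and each edge onto a union of edges (a path between the images of its endpoints, or a single vertex if these coincide). It is a coarse $k$-wiring if each vertex of $Y$ has at most $k$ preimage vertices and each edge of $Y$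 is contained in the images of at most $k$ edges of $\Gamma$. Its volume is the number of vertices in its image. $\mathrm{wir}^k(\Gamma\to Y)$ is the minimal volume of a coarse $k$-wiring ($+\infty$ if none), and $\mathrm{wir}^k_{X\to Y}(n)=\max\{\mathrm{wir}^k(\Gamma\to Y):\Gamma\subseteq X,\ |V\Gamma|\leq n\}$. *)

theory Defs
  imports Main "HOL-Library.Extended_Nat"
begin

text \<open>Graphs are pairs (V, E) with V a vertex set and E a set of undirected edges,
  each edge being a two-element set of vertices.\<close>

type_synonym 'v graph = "'v set \<times> 'v set set"

definition ladderV :: "(nat \<Rightarrow> nat) \<Rightarrow> nat \<Rightarrow> nat \<Rightarrow> (nat \<times> nat \<times> nat) set" where
  "ladderV f L n = {(n, i, j) | i j. i < f n \<and> j \<le> L * f n}"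

definition ladderE :: "(nat \<Rightarrow> nat) \<Rightarrow> nat \<Rightarrow> nat \<Rightarrow> (nat \<times> nat \<times> nat) set set" where
  "ladderE f L n =
     {{(n, i, j), (n, i, j + 1)} | i j. i < f n \<and> j < L * f n}
   \<union> {{(n, i, j), (n, i + 1, j)} | i j. i + 1 < f n \<and> j \<le> L * f n \<and> L dvd j}"

definition XnV :: "(nat \<Rightarrow> nat) \<Rightarrow> nat \<Rightarrow> (nat \<times> nat \<times> nat) set" where
  "XnV f n = ladderV f (2 ^ (2 ^ (2 * n))) n"
definition XnE :: "(nat \<Rightarrow> nat) \<Rightarrow> nat \<Rightarrow> (nat \<times> nat \<times> nat) set set" where
  "XnE f n = ladderE f (2 ^ (2 ^ (2 * n))) n"
definition YnV :: "(nat \<Rightarrow> nat) \<Rightarrow> nat \<Rightarrow> (nat \<times> nat \<times> nat) set" where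
  "YnV f n = ladderV f (2 ^ (2 ^ (2 * n + 1))) n"
definition YnE :: "(nat \<Rightarrow> nat) \<Rightarrow> nat \<Rightarrow> (nat \<times> nat \<times> nat) set set" where
  "YnE f n = ladderE f (2 ^ (2 ^ (2 * n + 1))) n"

text \<open>Disjoint unions over n \<ge> 1 (the first coordinate records the component).\<close>

definition Xgraph :: "(nat \<Rightarrow> nat) \<Rightarrow> (nat \<times> nat \<times> nat) graph" where
  "Xgraph f = ((\<Union>n\<in>{1..}. XnV f n), (\<Union>n\<in>{1..}. XnE f n))"
definition Ygraph :: "(nat \<Rightarrow> nat) \<Rightarrow> (nat \<times> nat \<times> nat) graph" where
  "Ygraph f = ((\<Union>n\<in>{1..}. YnV f n), (\<Union>n\<in>{1..}. YnE f n))"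

definition finite_subgraph :: "'v graph \<Rightarrow> 'v graph \<Rightarrow> bool" where
  "finite_subgraph \<Gamma> G \<longleftrightarrow> finite (fst \<Gamma>) \<and> fst \<Gamma> \<subseteq> fst G \<and> snd \<Gamma> \<subseteq> snd G
      \<and> (\<forall>e\<in>snd \<Gamma>. e \<subseteq> fst \<Gamma>)"

definition is_path :: "'v graph \<Rightarrow> 'v list \<Rightarrow> 'v \<Rightarrow> 'v \<Rightarrow> bool" where
  "is_path G xs a b \<longleftrightarrow> xs \<noteq> [] \<and> hd xs = a \<and> last xs = b \<and> distinct xs
      \<and> set xs \<subseteq> fst G \<and> (\<forall>i. i + 1 < length xs \<longrightarrow> {xs ! i, xs ! (i + 1)} \<in> snd G)"

definition path_edges :: "'v list \<Rightarrow> 'v set set" where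
  "path_edges xs = {{xs ! i, xs ! (i + 1)} | i. i + 1 < length xs}"

definition wiring :: "'a graph \<Rightarrow> 'b graph \<Rightarrow> ('a \<Rightarrow> 'b) \<Rightarrow> ('a set \<Rightarrow> 'b list) \<Rightarrow> bool" where
  "wiring \<Gamma> G \<phi> P \<longleftrightarrow> (\<forall>v\<in>fst \<Gamma>. \<phi> v \<in> fst G)
      \<and> (\<forall>e\<in>snd \<Gamma>. \<exists>u v. e = {u, v} \<and> is_path G (P e) (\<phi> u) (\<phi> v))"

definition coarse_wiring :: "nat \<Rightarrow> 'a graph \<Rightarrow> 'b graph \<Rightarrow> ('a \<Rightarrow> 'b) \<Rightarrow> ('a set \<Rightarrow> 'b list) \<Rightarrow> bool" where
  "coarse_wiring k \<Gamma> G \<phi> P \<longleftrightarrow> wiring \<Gamma> G \<phi> P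
      \<and> (\<forall>y\<in>fst G. card {v\<in>fst \<Gamma>. \<phi> v = y} \<le> k)
      \<and> (\<forall>d\<in>snd G. card {e\<in>snd \<Gamma>. d \<in> path_edges (P e)} \<le> k)"

definition wiring_volume :: "'a graph \<Rightarrow> ('a \<Rightarrow> 'b) \<Rightarrow> ('a set \<Rightarrow> 'b list) \<Rightarrow> nat" where
  "wiring_volume \<Gamma> \<phi> P = card (\<phi> ` fst \<Gamma> \<union> (\<Union>e\<in>snd \<Gamma>. set (P e)))"

definition wir :: "nat \<Rightarrow> 'a graph \<Rightarrow> 'b graph \<Rightarrow> enat" where
  "wir k \<Gamma> G = Inf {enat (wiring_volume \<Gamma> \<phi> P) | \<phi> P. coarse_wiring k \<Gamma> G \<phi> P}"

definition wir_fun :: "nat \<Rightarrow> 'a graph \<Rightarrow> 'b graph \<Rightarrow> nat \<Rightarrow> enat" where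
  "wir_fun k X Y n = Sup {wir k \<Gamma> Y | \<Gamma>. finite_subgraph \<Gamma> X \<and> card (fst \<Gamma>) \<le> n}"

end

theory Submission
  imports Defs
begin


definition gmap :: "nat \<Rightarrow> nat \<Rightarrow> (nat \<Rightarrow> nat) \<Rightarrow> nat \<Rightarrow> nat" where
 "gmap L K s j = (if j mod L < s (j div L) then (j div L)*K + j mod L
                  else (j div L + 1)*K - L + j mod L)"

locale gm = fixes L K :: nat and s :: "nat \<Rightarrow> nat"
  assumes L2: "2 \<le> L" and KL: "2*L \<le> K" and s_pos: "\<And>q. 0 < s q" and s_lt: "\<And>q. s q < L"
begin

lemma upper_ok: "L \<le> (q+1)*K" using KL by (metis add_leE le_add2 mult.commute mult_2 mult_le_mono order_trans Suc_eq_plus1 le_add1 mult_1)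

lemma g_lt: "gmap L K s j < (j div L + 1) * K"
proof -
  have "j mod L < L" using L2 by simp
  then show ?thesis using KL upper_ok[of "j div L"] unfolding gmap_def by auto
qed

lemma g_ge: "(j div L) * K \<le> gmap L K s j"
proof -
  have "j mod L < L" using L2 by simp
  have "(j div L)*K + L \<le> (j div L + 1) * K" using KL by simp
  then show ?thesis using KL upper_ok[of "j div L"] unfolding gmap_def by auto
qed

lemma g_mono: assumes "j1 < j2" shows "gmap L K s j1 < gmap L K s j2"
proof (cases "j1 div L < j2 div L")
  case True
  then have "(j1 div L + 1) * K \<le> (j2 div L) * K" by (metis Suc_eq_plus1 Suc_leI mult_le_mono1)
  then show ?thesis using g_lt[of j1] g_ge[of j2] by linarith
next
  case False
  have "j1 div L \<le> j2 div L" using assms by (simp add: div_le_mono)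
  then have q: "j1 div L = j2 div L" using False by linarith
  then have t: "j1 mod L < j2 mod L" using assms by (metis div_mult_mod_eq add_less_cancel_left)
  have "j2 mod L < L" using L2 by simp
  have h: "(j1 div L)*K + L \<le> (j1 div L + 1) * K" using KL by simp
  have u: "L \<le> (j1 div L + 1) * K" by (rule upper_ok)
  show ?thesis
  proof (cases "j1 mod L < s (j1 div L)")
    case c1: True
    show ?thesis
    proof (cases "j2 mod L < s (j2 div L)")
      case True
      then show ?thesis using c1 q t unfolding gmap_def by simp
    next
      case False
      then have "gmap L K s j2 = (j1 div L + 1)*K - L + j2 mod L" using q unfolding gmap_def by simp
      moreover have "gmap L K s j1 = (j1 div L)*K + j1 mod L" using c1 unfolding gmap_def by simp
      ultimately show ?thesis using h u t \<open>j2 mod L < L\<close> by linarith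
    qed
  next
    case c1: False
    then have "\<not> j2 mod L < s (j2 div L)" using q t by (metis less_trans)
    then have "gmap L K s j2 = (j1 div L + 1)*K - L + j2 mod L" using q unfolding gmap_def by simp
    moreover have "gmap L K s j1 = (j1 div L + 1)*K - L + j1 mod L" using c1 unfolding gmap_def by simp
    ultimately show ?thesis using t by linarith
  qed
qed

lemma g_inj: "gmap L K s j1 = gmap L K s j2 \<Longrightarrow> j1 = j2"
  by (metis g_mono less_irrefl nat_neq_iff)

lemma g_dvd: "L dvd j \<Longrightarrow> gmap L K s j = (j div L) * K"
  using s_pos unfolding gmap_def by auto

lemma g_suc: assumes "\<And>q. j + 1 \<noteq> q*L + s q" shows "gmap L K s (j+1) = gmap L K s j + 1"
proof (cases "(j+1) mod L = 0")
  case True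
  define q' where "q' = (j+1) div L"
  have e: "j+1 = q'*L" using div_mult_mod_eq[of "j+1" L] True unfolding q'_def by linarith
  then have "q' \<noteq> 0" by (metis add_eq_0_iff_both_eq_0 mult_zero_left one_neq_zero)
  then obtain q where "q' = q + 1" by (metis Suc_eq_plus1 not0_implies_Suc)
  then have q: "j + 1 = (q+1)*L" using e by simp
  then have "j = q*L + (L - 1)" using L2 by (simp add: algebra_simps)
  define r where "r = L - 1"
  have jq: "j = r + q*L" using \<open>j = q*L + (L - 1)\<close> unfolding r_def by simp
  have "L \<noteq> 0" "r < L" using L2 unfolding r_def by auto
  then have "j div L = q" "j mod L = r" unfolding jq by simp_all
  then have jd: "j div L = q" "j mod L = L - 1" unfolding r_def by simp_all
  have "(j+1) div L = q+1" "(j+1) mod L = 0" using q L2 by auto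
  then show ?thesis using jd s_pos[of "q+1"] s_lt[of q] upper_ok[of q] L2 unfolding gmap_def by auto
next
  case False
  then have d: "(j+1) div L = j div L" "(j+1) mod L = j mod L + 1"
    by (metis Suc_eq_plus1 mod_Suc div_Suc)+
  have "j + 1 = (j div L)*L + (j mod L + 1)" by simp
  then have "j mod L + 1 \<noteq> s (j div L)" using assms[of "j div L"] by metis
  then show ?thesis using d upper_ok[of "j div L"] L2 unfolding gmap_def by auto
qed

lemma g_bound: assumes "j \<le> L*F" shows "gmap L K s j \<le> K*F"
proof -
  have le: "j div L \<le> F" using div_le_mono[OF assms, of L] L2 by simp
  show ?thesis
  proof (cases "L dvd j")
    case True
    then show ?thesis using g_dvd[OF True] le by (simp add: mult.commute)
  next
    case False
    have "j div L \<noteq> F"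
    proof
      assume eq: "j div L = F"
      have "(j div L) * L \<le> j" by (simp add: div_times_less_eq_dividend)
      then have "j = L * F" using eq assms by (simp add: mult.commute)
      then show False using False by simp
    qed
    then have "j div L < F" using le by simp
    then have "(j div L + 1)*K \<le> F*K" by (intro mult_le_mono1) simp
    then have "(j div L + 1)*K \<le> K*F" by (simp add: mult.commute)
    then show ?thesis using g_lt[of j] by linarith
  qed
qed
end



definition LL :: "nat \<Rightarrow> nat" where "LL m = 2 ^ (2 ^ (2 * m))"

lemma LL_sq: "2 ^ (2 ^ (2 * m + 1)) = LL m * LL m"
proof -
  have "(2::nat)^(2*m+1) = 2^(2*m) + 2^(2*m)" by simp
  then show ?thesis unfolding LL_def by (simp only: power_add)
qed

lemma LL_ge: "2 \<le> LL m"
proof -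
  have "(2::nat)^1 \<le> 2 ^ (2 ^ (2 * m))" by (rule power_increasing) auto
  then show ?thesis unfolding LL_def by simp
qed

lemma LL_mono: "m \<le> m' \<Longrightarrow> LL m \<le> LL m'"
  unfolding LL_def by (intro power_increasing) auto

lemma LL_suc: "LL (Suc m) = (LL m * LL m) * (LL m * LL m)"
proof -
  have "LL (Suc m) = 2 ^ (2 ^ (2*m) * 4)" unfolding LL_def by (simp add: power_add)
  also have "... = LL m ^ 4" unfolding LL_def by (simp add: power_mult)
  finally show ?thesis by (simp add: power4_eq_xxxx)
qed

lemma le_pow: "p + 1 \<le> (2::nat) ^ p"
  by (induction p) auto

lemma three_le: "3 * p \<le> (2::nat) ^ (2 * p + 1)"
proof (induction p)
  case (Suc p)
  have "3 * Suc p = 3*p + 3" by simp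
  also have "... \<le> 2^(2*p+1) + 3 * 2^(2*p+1)" using Suc one_le_power[of "2::nat" "2*p+1"] by linarith
  also have "... = (2::nat)^(2*Suc p + 1)" by simp
  finally show ?case .
qed auto

lemma cube_le: "(p+1)^3 \<le> LL p * LL p"
proof -
  have "(p+1)^3 \<le> (2^p)^3" by (rule power_mono[OF le_pow]) auto
  also have "... = 2^(3*p)" by (simp add: power_mult[symmetric] mult.commute)
  also have "... \<le> 2^(2^(2*p+1))" by (rule power_increasing[OF three_le]) auto
  finally show ?thesis using LL_sq by simp
qed

lemma n_le_LL: "n \<le> LL n"
proof -
  have "n + 1 \<le> 2^n" by (rule le_pow)
  also have "(2::nat)^n \<le> 2^(2^(2*n))" by (rule power_increasing) (use le_pow[of "2*n"] in auto)
  finally show ?thesis unfolding LL_def by simp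
qed

definition Vs :: "nat \<times> nat \<times> nat \<Rightarrow> (nat \<times> nat \<times> nat) set" where
  "Vs = (\<lambda>(m,i,j). {(m,i,j),(m,i,j+1)})"
definition Rs :: "nat \<times> nat \<times> nat \<Rightarrow> (nat \<times> nat \<times> nat) set" where
  "Rs = (\<lambda>(m,i,j). {(m,i,j),(m,i+1,j)})"

lemma Vs_simp[simp]: "Vs (m,i,j) = {(m,i,j),(m,i,j+1)}" by (simp add: Vs_def)
lemma Rs_simp[simp]: "Rs (m,i,j) = {(m,i,j),(m,i+1,j)}" by (simp add: Rs_def)

lemma Vs_inj: "Vs x = Vs y \<Longrightarrow> x = y"
  by (cases x; cases y) (auto simp: doubleton_eq_iff)
lemma Rs_inj: "Rs x = Rs y \<Longrightarrow> x = y"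
  by (cases x; cases y) (auto simp: doubleton_eq_iff)
lemma Vs_Rs: "Vs x \<noteq> Rs y"
  by (cases x; cases y) (auto simp: doubleton_eq_iff)

lemma X_vert: "v \<in> fst (Xgraph f) \<Longrightarrow> \<exists>m i j. v = (m,i,j) \<and> 1 \<le> m \<and> i < f m \<and> j \<le> LL m * f m"
  unfolding Xgraph_def XnV_def ladderV_def LL_def by auto

lemma X_edge: "e \<in> snd (Xgraph f) \<Longrightarrow> \<exists>m i j. 1 \<le> m \<and>
   ((e = Vs (m,i,j) \<and> i < f m \<and> j < LL m * f m) \<or> (e = Rs (m,i,j) \<and> i + 1 < f m \<and> j \<le> LL m * f m \<and> LL m dvd j))"
  unfolding Xgraph_def XnE_def ladderE_def LL_def by auto

lemma Y_vert: "1 \<le> m \<Longrightarrow> i < f m \<Longrightarrow> j \<le> LL m * LL m * f m \<Longrightarrow> (m,i,j) \<in> fst (Ygraph f)"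
  unfolding Ygraph_def YnV_def ladderV_def LL_sq[symmetric] by auto

lemma Y_V: "1 \<le> m \<Longrightarrow> i < f m \<Longrightarrow> j < LL m * LL m * f m \<Longrightarrow> Vs (m,i,j) \<in> snd (Ygraph f)"
  unfolding Ygraph_def YnE_def ladderE_def LL_sq[symmetric] by auto

lemma Y_R: assumes "1 \<le> m" "i + 1 < f m" "j \<le> LL m * LL m * f m" "LL m * LL m dvd j" shows "Rs (m,i,j) \<in> snd (Ygraph f)"
proof -
  have "Rs (m,i,j) \<in> ladderE f (LL m * LL m) m" unfolding ladderE_def using assms by auto
  moreover have "YnE f m = ladderE f (LL m * LL m) m" by (simp only: YnE_def LL_sq)
  ultimately have "Rs (m,i,j) \<in> YnE f m" by simp
  then show ?thesis unfolding Ygraph_def snd_conv by (rule UN_I[rotated]) (use assms(1) in simp)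
qed

lemma XnV_eq: "XnV f n = {n} \<times> {..<f n} \<times> {..LL n * f n}"
  unfolding XnV_def ladderV_def LL_def by auto

lemma card_XnV: "card (XnV f n) = f n * (LL n * f n + 1)"
  unfolding XnV_eq by (simp add: card_cartesian_product)




definition gg :: "(nat \<Rightarrow> nat \<Rightarrow> nat) \<Rightarrow> nat \<Rightarrow> nat \<Rightarrow> nat" where
  "gg s m j = gmap (LL m) (LL m * LL m) (s m) j"

definition phi :: "nat \<Rightarrow> (nat \<Rightarrow> nat \<Rightarrow> nat) \<Rightarrow> nat \<times> nat \<times> nat \<Rightarrow> nat \<times> nat \<times> nat" where
  "phi n s = (\<lambda>(m,i,j). if m < n then (m,i,LL m * j) else if m = n then (n,0,j) else (m,i,gg s m j))"

definition col :: "nat \<Rightarrow> nat \<Rightarrow> nat \<Rightarrow> nat \<Rightarrow> (nat \<times> nat \<times> nat) list" where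
  "col m i a L = map (\<lambda>t. (m,i,t)) [a..<a+L+1]"

definition vp :: "nat \<Rightarrow> (nat \<Rightarrow> nat \<Rightarrow> nat) \<Rightarrow> nat \<times> nat \<times> nat \<Rightarrow> (nat \<times> nat \<times> nat) list" where
  "vp n s = (\<lambda>(m,i,j). if m < n then col m i (LL m * j) (LL m)
     else if m = n then [(n,0,j),(n,0,j+1)] else [(m,i,gg s m j),(m,i,gg s m (j+1))])"

definition rp :: "nat \<Rightarrow> (nat \<Rightarrow> nat \<Rightarrow> nat) \<Rightarrow> nat \<times> nat \<times> nat \<Rightarrow> (nat \<times> nat \<times> nat) list" where
  "rp n s = (\<lambda>(m,i,j). if m < n then [(m,i,LL m * j),(m,i+1,LL m * j)]
     else if m = n then [(n,0,j)] else [(m,i,gg s m j),(m,i+1,gg s m j)])"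

definition Pw :: "nat \<Rightarrow> (nat \<Rightarrow> nat \<Rightarrow> nat) \<Rightarrow> (nat \<times> nat \<times> nat) set \<Rightarrow> (nat \<times> nat \<times> nat) list" where
  "Pw n s e = (if \<exists>x. e = Vs x then vp n s (SOME x. e = Vs x)
     else if \<exists>x. e = Rs x then rp n s (SOME x. e = Rs x) else [])"

lemma Pw_V: "Pw n s (Vs x) = vp n s x"
proof -
  have sq: "(SOME y. Vs x = Vs y) = x" by (rule some_equality) (auto dest: Vs_inj)
  have ex: "\<exists>y. Vs x = Vs y" by blast
  show ?thesis unfolding Pw_def by (simp only: if_P[OF ex] sq)
qed

lemma Pw_R: "Pw n s (Rs x) = rp n s x"
proof -
  have sq: "(SOME y. Rs x = Rs y) = x" by (rule some_equality) (auto dest: Rs_inj)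
  have nex: "\<not> (\<exists>y. Rs x = Vs y)" using Vs_Rs by metis
  have ex: "\<exists>y. Rs x = Rs y" by blast
  show ?thesis unfolding Pw_def by (simp only: if_not_P[OF nex] if_P[OF ex] sq)
qed

lemma pe2: "path_edges [a,b] = {{a,b}}"
proof -
  have "{i. i + 1 < 2} = {0::nat}" by auto
  then show ?thesis unfolding path_edges_def by auto
qed

lemma pe1: "path_edges [a] = {}"
  unfolding path_edges_def by auto

lemma col_nth: "k < L + 1 \<Longrightarrow> col m i a L ! k = (m,i,a+k)"
  unfolding col_def by (simp del: upt_Suc)

lemma col_len: "length (col m i a L) = L + 1"
  unfolding col_def by simp

lemma pe_col: "path_edges (col m i a L) = {Vs (m,i,t) | t. a \<le> t \<and> t < a + L}"
proof -
  have "path_edges (col m i a L) = {Vs (m,i,a+k) | k. k < L}"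
  proof (rule set_eqI, rule iffI)
    fix d assume "d \<in> path_edges (col m i a L)"
    then obtain k where "d = {col m i a L ! k, col m i a L ! (k+1)}" "k + 1 < L + 1"
      unfolding path_edges_def col_len by auto
    then show "d \<in> {Vs (m,i,a+k) | k. k < L}" by (auto simp: col_nth)
  next
    fix d assume "d \<in> {Vs (m,i,a+k) | k. k < L}"
    then obtain k where "d = Vs (m,i,a+k)" "k < L" by auto
    then have "d = {col m i a L ! k, col m i a L ! (k+1)}" "k + 1 < length (col m i a L)"
      by (auto simp: col_nth col_len)
    then show "d \<in> path_edges (col m i a L)" unfolding path_edges_def by blast
  qed
  also have "... = {Vs (m,i,t) | t. a \<le> t \<and> t < a + L}"
  proof (rule set_eqI, rule iffI)
    fix d assume "d \<in> {Vs (m,i,a+k) | k. k < L}"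
    then obtain k where "d = Vs (m,i,a+k)" "k < L" by auto
    moreover have "a \<le> a + k" "a + k < a + L" using \<open>k < L\<close> by auto
    ultimately show "d \<in> {Vs (m,i,t) | t. a \<le> t \<and> t < a + L}" by blast
  next
    fix d assume "d \<in> {Vs (m,i,t) | t. a \<le> t \<and> t < a + L}"
    then obtain t where "d = Vs (m,i,t)" "a \<le> t" "t < a + L" by auto
    then have "d = Vs (m,i,a+(t-a))" "t - a < L" by auto
    then show "d \<in> {Vs (m,i,a+k) | k. k < L}" by blast
  qed
  finally show ?thesis .
qed

lemma set_col: "set (col m i a L) = {(m,i,t) | t. a \<le> t \<and> t \<le> a + L}"
  unfolding col_def by auto

lemma ip1: "a \<in> fst G \<Longrightarrow> is_path G [a] a a"
  unfolding is_path_def by auto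

lemma ip2: "a \<noteq> b \<Longrightarrow> a \<in> fst G \<Longrightarrow> b \<in> fst G \<Longrightarrow> {a,b} \<in> snd G \<Longrightarrow> is_path G [a,b] a b"
  unfolding is_path_def by (auto simp: less_Suc_eq)

lemma ipcol:
  assumes "\<And>t. a \<le> t \<Longrightarrow> t \<le> a + L \<Longrightarrow> (m,i,t) \<in> fst G"
    and "\<And>t. a \<le> t \<Longrightarrow> t < a + L \<Longrightarrow> Vs (m,i,t) \<in> snd G"
  shows "is_path G (col m i a L) (m,i,a) (m,i,a+L)"
proof -
  have ne: "col m i a L \<noteq> []" using col_len[of m i a L] by auto
  moreover have "hd (col m i a L) = (m,i,a)" unfolding col_def by (simp add: upt_rec)
  moreover have "last (col m i a L) = (m,i,a+L)"
    using col_nth[of L L m i a] col_len[of m i a L] last_conv_nth[OF ne] by simp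
  moreover have "distinct (col m i a L)" unfolding col_def by (simp add: distinct_map inj_on_def del: upt_Suc)
  moreover have "set (col m i a L) \<subseteq> fst G" using assms(1) unfolding set_col by auto
  moreover have "\<forall>k. k + 1 < length (col m i a L) \<longrightarrow> {col m i a L ! k, col m i a L ! (k+1)} \<in> snd G"
  proof (intro allI impI)
    fix k assume k: "k + 1 < length (col m i a L)"
    then have "{col m i a L ! k, col m i a L ! (k+1)} = Vs (m,i,a+k)" by (simp add: col_len col_nth)
    moreover have "Vs (m,i,a+k) \<in> snd G" using k col_len[of m i a L] by (intro assms(2)) auto
    ultimately show "{col m i a L ! k, col m i a L ! (k+1)} \<in> snd G" by simp
  qed
  ultimately show ?thesis unfolding is_path_def by (intro conjI) assumption+
qed

lemma gm_inst: assumes "\<And>q. 0 < s m q \<and> s m q < LL m" shows "gm (LL m) (LL m * LL m) (s m)"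
proof
  show "2 \<le> LL m" by (rule LL_ge)
  show "2 * LL m \<le> LL m * LL m" using LL_ge[of m] by simp
qed (use assms in auto)




locale W =
  fixes f :: "nat \<Rightarrow> nat" and n :: nat and V :: "(nat \<times> nat \<times> nat) set"
    and E :: "(nat \<times> nat \<times> nat) set set" and s :: "nat \<Rightarrow> nat \<Rightarrow> nat"
  assumes f_one: "f 1 = 1" and f_bounds: "\<forall>p\<ge>2. 2 \<le> f p \<and> f p \<le> p" and n2: "2 \<le> n"
    and finV: "finite V" and VX: "V \<subseteq> fst (Xgraph f)" and EX: "E \<subseteq> snd (Xgraph f)"
    and EV: "\<forall>e\<in>E. e \<subseteq> V"
    and gap: "\<And>m q. n < m \<Longrightarrow> 0 < s m q \<and> s m q < LL m \<and> (\<forall>i. (m,i,q*LL m + s m q) \<notin> V)"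
begin

lemma fm_le: "1 \<le> m \<Longrightarrow> f m \<le> m"
  using f_one f_bounds by (cases "m = 1") auto

lemma fn2: "2 \<le> f n" using f_bounds n2 by auto

lemma gmm: "n < m \<Longrightarrow> gm (LL m) (LL m * LL m) (s m)"
  by (rule gm_inst) (use gap in auto)

lemma gg_inj: "n < m \<Longrightarrow> gg s m j1 = gg s m j2 \<Longrightarrow> j1 = j2"
  unfolding gg_def using gm.g_inj[OF gmm] by blast

lemma gg_bound: "n < m \<Longrightarrow> j \<le> LL m * F \<Longrightarrow> gg s m j \<le> LL m * LL m * F"
  unfolding gg_def using gm.g_bound[OF gmm] by blast

lemma gg_dvd: "n < m \<Longrightarrow> LL m dvd j \<Longrightarrow> gg s m j = (j div LL m) * (LL m * LL m)"
  unfolding gg_def using gm.g_dvd[OF gmm] by blast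

lemma gg_suc: assumes "n < m" "(m,i,j+1) \<in> V" shows "gg s m (j+1) = gg s m j + 1"
proof -
  have "\<And>q. j + 1 \<noteq> q * LL m + s m q" using gap[OF assms(1)] assms(2) by metis
  then show ?thesis unfolding gg_def using gm.g_suc[OF gmm[OF assms(1)]] by blast
qed

lemma phi_simp: "phi n s (m,i,j) = (if m < n then (m,i,LL m * j) else if m = n then (n,0,j) else (m,i,gg s m j))"
  unfolding phi_def by simp

lemma phi_fst: "fst (phi n s x) = fst x"
  by (cases x) (auto simp: phi_simp)

lemma phi_inj: assumes "phi n s x = phi n s y" "fst x \<noteq> n" shows "x = y"
proof -
  obtain m i j where x: "x = (m,i,j)" by (cases x)
  obtain m' i' j' where y: "y = (m',i',j')" by (cases y)
  have mm: "m' = m" using phi_fst[of x] phi_fst[of y] assms(1) x y by simp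
  have LLp: "LL m > 0" using LL_ge[of m] by simp
  show ?thesis
  proof (cases "m < n")
    case True
    then show ?thesis using assms x y mm LLp by (auto simp: phi_simp)
  next
    case False
    then have "n < m" using assms(2) x by auto
    then show ?thesis using assms x y mm gg_inj[of m j j'] by (auto simp: phi_simp)
  qed
qed

lemma V_form: "v \<in> V \<Longrightarrow> \<exists>m i j. v = (m,i,j) \<and> 1 \<le> m \<and> i < f m \<and> j \<le> LL m * f m"
  using VX X_vert by blast

lemma E_form: "e \<in> E \<Longrightarrow> \<exists>m i j. 1 \<le> m \<and>
   ((e = Vs (m,i,j) \<and> i < f m \<and> j < LL m * f m) \<or> (e = Rs (m,i,j) \<and> i + 1 < f m \<and> j \<le> LL m * f m \<and> LL m dvd j))"
  using EX X_edge by blast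

lemma phi_Y: assumes "v \<in> V" shows "phi n s v \<in> fst (Ygraph f)"
proof -
  obtain m i j where v: "v = (m,i,j)" "1 \<le> m" "i < f m" "j \<le> LL m * f m" using V_form[OF assms] by blast
  have L1: "1 \<le> LL m" using LL_ge[of m] by simp
  show ?thesis
  proof (cases "m < n")
    case True
    have "LL m * j \<le> LL m * (LL m * f m)" using v(4) by simp
    then show ?thesis using True v by (auto simp: phi_simp intro!: Y_vert)
  next
    case c: False
    show ?thesis
    proof (cases "m = n")
      case True
      have "LL m * f m \<le> LL m * (LL m * f m)" using L1 by simp
      then have "j \<le> LL m * LL m * f m" using v(4) unfolding mult.assoc by linarith
      then show ?thesis using True v fn2 by (auto simp: phi_simp intro!: Y_vert)
    next
      case False
      then have "n < m" using c by simp
      then show ?thesis using v gg_bound[of m j "f m"] by (auto simp: phi_simp intro!: Y_vert)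
    qed
  qed
qed


lemma LLsq_mult: "LL m * (j+1) \<le> LL m * (LL m * F) \<Longrightarrow> LL m * (j+1) \<le> LL m * LL m * F"
  by (simp add: mult.assoc)

lemma path_V:
  assumes e: "Vs (m,i,j) \<in> E" and m: "1 \<le> m" and i: "i < f m" and j: "j < LL m * f m"
  shows "is_path (Ygraph f) (Pw n s (Vs (m,i,j))) (phi n s (m,i,j)) (phi n s (m,i,j+1))"
proof -
  have inV: "(m,i,j) \<in> V" "(m,i,j+1) \<in> V" using EV e by auto
  have L1: "1 \<le> LL m" using LL_ge[of m] by simp
  have jj: "j + 1 \<le> LL m * f m" using j by simp
  show ?thesis
  proof (cases "m < n")
    case True
    have b0: "LL m * (j+1) \<le> LL m * (LL m * f m)" by (rule mult_le_mono2[OF jj])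
    then have b: "LL m * (j+1) \<le> LL m * LL m * f m" by (simp only: mult.assoc)
    have "is_path (Ygraph f) (col m i (LL m * j) (LL m)) (m,i,LL m * j) (m,i,LL m * j + LL m)"
    proof (rule ipcol)
      fix t assume "LL m * j \<le> t" "t \<le> LL m * j + LL m"
      then show "(m,i,t) \<in> fst (Ygraph f)" using b m i by (intro Y_vert) (auto simp: algebra_simps)
    next
      fix t assume "LL m * j \<le> t" "t < LL m * j + LL m"
      then show "Vs (m,i,t) \<in> snd (Ygraph f)" using b m i by (intro Y_V) (auto simp: algebra_simps)
    qed
    moreover have e1: "Pw n s (Vs (m,i,j)) = col m i (LL m * j) (LL m)" using True by (simp add: Pw_V vp_def del: Vs_simp)
    moreover have e2: "phi n s (m,i,j+1) = (m,i,LL m * j + LL m)" using True by (simp add: phi_simp)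
    moreover have e3: "phi n s (m,i,j) = (m,i,LL m * j)" using True by (simp add: phi_simp)
    ultimately show ?thesis by (simp only: e1 e2 e3)
  next
    case c: False
    show ?thesis
    proof (cases "m = n")
      case True
      have "LL m * f m \<le> LL m * (LL m * f m)" using L1 by simp
      then have "j < LL m * LL m * f m" using j unfolding mult.assoc by linarith
      then have "is_path (Ygraph f) [(n,0,j),(n,0,j+1)] (n,0,j) (n,0,j+1)"
        using True m fn2 Y_V[of n 0 f j] by (intro ip2 Y_vert; simp)
      then show ?thesis using True by (simp add: Pw_V vp_def phi_simp del: Vs_simp Rs_simp)
    next
      case False
      then have nm: "n < m" using c by simp
      have gs: "gg s m (j+1) = gg s m j + 1" by (rule gg_suc[OF nm inV(2)])
      have "gg s m (j+1) \<le> LL m * LL m * f m" using gg_bound[OF nm jj] .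
      then have gl: "gg s m j < LL m * LL m * f m" using gs by simp
      have "is_path (Ygraph f) [(m,i,gg s m j),(m,i,gg s m (j+1))] (m,i,gg s m j) (m,i,gg s m (j+1))"
        using gs gl m i Y_V[of m i f "gg s m j"] by (intro ip2 Y_vert; simp)
      then show ?thesis using nm by (simp add: Pw_V vp_def phi_simp del: Vs_simp Rs_simp)
    qed
  qed
qed

lemma path_R:
  assumes e: "Rs (m,i,j) \<in> E" and m: "1 \<le> m" and i: "i + 1 < f m" and j: "j \<le> LL m * f m" and d: "LL m dvd j"
  shows "is_path (Ygraph f) (Pw n s (Rs (m,i,j))) (phi n s (m,i,j)) (phi n s (m,i+1,j))"
proof -
  have inV: "(m,i,j) \<in> V" "(m,i+1,j) \<in> V" using EV e by auto
  have L1: "1 \<le> LL m" using LL_ge[of m] by simp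
  show ?thesis
  proof (cases "m < n")
    case True
    have b0: "LL m * j \<le> LL m * (LL m * f m)" by (rule mult_le_mono2[OF j])
    then have b: "LL m * j \<le> LL m * LL m * f m" by (simp only: mult.assoc)
    have dd: "LL m * LL m dvd LL m * j" using d by simp
    have "is_path (Ygraph f) [(m,i,LL m * j),(m,i+1,LL m * j)] (m,i,LL m * j) (m,i+1,LL m * j)"
      using b dd m i Y_R[of m i f "LL m * j"] by (intro ip2 Y_vert; simp)
    then show ?thesis using True by (simp add: Pw_R rp_def phi_simp del: Vs_simp Rs_simp)
  next
    case c: False
    show ?thesis
    proof (cases "m = n")
      case True
      have "(n,0,j) \<in> fst (Ygraph f)" using phi_Y[OF inV(1)] True by (simp add: phi_simp)
      then have "is_path (Ygraph f) [(n,0,j)] (n,0,j) (n,0,j)" by (rule ip1)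
      then show ?thesis using True by (simp add: Pw_R rp_def phi_simp del: Vs_simp Rs_simp)
    next
      case False
      then have nm: "n < m" using c by simp
      have gb: "gg s m j \<le> LL m * LL m * f m" using gg_bound[OF nm j] .
      have gd: "LL m * LL m dvd gg s m j" using gg_dvd[OF nm d] by simp
      have "is_path (Ygraph f) [(m,i,gg s m j),(m,i+1,gg s m j)] (m,i,gg s m j) (m,i+1,gg s m j)"
        using gb gd m i Y_R[of m i f "gg s m j"] by (intro ip2 Y_vert; simp)
      then show ?thesis using nm by (simp add: Pw_R rp_def phi_simp del: Vs_simp Rs_simp)
    qed
  qed
qed

lemma wiring_ok: "wiring (V,E) (Ygraph f) (phi n s) (Pw n s)"
  unfolding wiring_def fst_conv snd_conv
proof (intro conjI ballI)
  fix v assume "v \<in> V" then show "phi n s v \<in> fst (Ygraph f)" by (rule phi_Y)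
next
  fix e assume e: "e \<in> E"
  from E_form[OF e] obtain m i j where mij: "1 \<le> m"
    "(e = Vs (m,i,j) \<and> i < f m \<and> j < LL m * f m) \<or> (e = Rs (m,i,j) \<and> i + 1 < f m \<and> j \<le> LL m * f m \<and> LL m dvd j)"
    by blast
  from mij(2) show "\<exists>u v. e = {u, v} \<and> is_path (Ygraph f) (Pw n s e) (phi n s u) (phi n s v)"
  proof
    assume h: "e = Vs (m,i,j) \<and> i < f m \<and> j < LL m * f m"
    then show ?thesis using path_V[of m i j] e mij(1) by (intro exI[of _ "(m,i,j)"] exI[of _ "(m,i,j+1)"]) auto
  next
    assume h: "e = Rs (m,i,j) \<and> i + 1 < f m \<and> j \<le> LL m * f m \<and> LL m dvd j"
    then show ?thesis using path_R[of m i j] e mij(1) by (intro exI[of _ "(m,i,j)"] exI[of _ "(m,i+1,j)"]) auto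
  qed
qed


lemma fibre: "card {v \<in> V. phi n s v = y} \<le> f n"
proof (cases "fst y = n")
  case True
  have "{v \<in> V. phi n s v = y} \<subseteq> (\<lambda>i. (n,i,snd (snd y))) ` {..<f n}"
  proof
    fix v assume v: "v \<in> {v \<in> V. phi n s v = y}"
    then obtain m i j where vv: "v = (m,i,j)" "i < f m" using V_form by blast
    have "m = n" using phi_fst[of v] v vv True by auto
    then have "y = (n,0,j)" using v vv by (auto simp: phi_simp)
    then show "v \<in> (\<lambda>i. (n,i,snd (snd y))) ` {..<f n}" using vv \<open>m = n\<close> by auto
  qed
  then have "card {v \<in> V. phi n s v = y} \<le> card ((\<lambda>i. (n,i,snd (snd y))) ` {..<f n})"
    by (rule card_mono[rotated]) simp
  also have "... \<le> card {..<f n}" by (rule card_image_le) simp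
  finally show ?thesis by simp
next
  case False
  have fin: "finite {v \<in> V. phi n s v = y}" using finV by simp
  have "\<forall>a\<in>{v \<in> V. phi n s v = y}. \<forall>b\<in>{v \<in> V. phi n s v = y}. a = b"
    using phi_inj phi_fst False by (metis (mono_tags, lifting) mem_Collect_eq)
  then have "card {v \<in> V. phi n s v = y} \<le> Suc 0" using card_le_Suc0_iff_eq[OF fin] by blast
  then show ?thesis using fn2 by simp
qed

lemma pe_ne: "d \<in> path_edges xs \<Longrightarrow> \<exists>x. x \<in> d"
  unfolding path_edges_def by auto

lemma img2: "phi n s ` {a,b} = {phi n s a, phi n s b}" by simp

lemma pe_V: "path_edges (Pw n s (Vs (m,i,j))) =
  (if m < n then {Vs (m,i,t) | t. LL m * j \<le> t \<and> t < LL m * j + LL m}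
   else if m = n then {Vs (n,0,j)} else {phi n s ` Vs (m,i,j)})"
proof -
  have "Pw n s (Vs (m,i,j)) = (if m < n then col m i (LL m * j) (LL m)
     else if m = n then [(n,0,j),(n,0,j+1)] else [phi n s (m,i,j), phi n s (m,i,j+1)])"
    by (simp add: Pw_V vp_def phi_simp del: Vs_simp)
  then show ?thesis by (simp add: pe_col pe2)
qed

lemma pe_R: "path_edges (Pw n s (Rs (m,i,j))) =
  (if m < n then {Rs (m,i,LL m * j)} else if m = n then {} else {phi n s ` Rs (m,i,j)})"
proof -
  have "Pw n s (Rs (m,i,j)) = (if m < n then [(m,i,LL m * j),(m,i+1,LL m * j)]
     else if m = n then [(n,0,j)] else [phi n s (m,i,j), phi n s (m,i+1,j)])"
    by (simp add: Pw_R rp_def phi_simp del: Rs_simp)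
  then show ?thesis by (simp add: pe1 pe2)
qed

lemma div_eq: "0 < L \<Longrightarrow> L * j \<le> t \<Longrightarrow> t < L * j + L \<Longrightarrow> t div L = (j::nat)"
  by (rule div_nat_eqI) simp_all

lemma pe_same:
  assumes e1: "e1 \<in> E" and e2: "e2 \<in> E" and d1: "d \<in> path_edges (Pw n s e1)" and d2: "d \<in> path_edges (Pw n s e2)"
  shows "e1 = e2 \<or> (\<exists>i1 i2 j. e1 = Vs (n,i1,j) \<and> e2 = Vs (n,i2,j))"
proof -
  obtain m1 i1 j1 where f1: "1 \<le> m1" "(e1 = Vs (m1,i1,j1)) \<or> (e1 = Rs (m1,i1,j1) \<and> LL m1 dvd j1)"
    using E_form[OF e1] by blast
  obtain m2 i2 j2 where f2: "1 \<le> m2" "(e2 = Vs (m2,i2,j2)) \<or> (e2 = Rs (m2,i2,j2) \<and> LL m2 dvd j2)"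
    using E_form[OF e2] by blast
  obtain x where x: "x \<in> d" using pe_ne[OF d1] by blast
  have fx1: "fst x = m1"
    using f1(2) d1 x by (auto simp: pe_V pe_R split: if_splits simp del: Vs_simp Rs_simp) (auto simp: phi_simp split: if_splits)
  have fx2: "fst x = m2"
    using f2(2) d2 x by (auto simp: pe_V pe_R split: if_splits simp del: Vs_simp Rs_simp) (auto simp: phi_simp split: if_splits)
  have mm: "m2 = m1" using fx1 fx2 by simp
  have LLp: "0 < LL m1" using LL_ge[of m1] by simp
  consider (lt) "m1 < n" | (eq) "m1 = n" | (gt) "n < m1" by linarith
  then show ?thesis
  proof cases
    case gt
    have p1: "path_edges (Pw n s e1) = {phi n s ` e1}" using f1(2) gt by (auto simp: pe_V pe_R simp del: Vs_simp Rs_simp)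
    have p2: "path_edges (Pw n s e2) = {phi n s ` e2}" using f2(2) gt mm by (auto simp: pe_V pe_R simp del: Vs_simp Rs_simp)
    have im: "phi n s ` e1 = phi n s ` e2" using d1 d2 p1 p2 by simp
    have s1: "\<forall>u\<in>e1 \<union> e2. fst u = m1" using f1(2) f2(2) mm by auto
    have "inj_on (phi n s) (e1 \<union> e2)"
    proof (rule inj_onI)
      fix a b assume "a \<in> e1 \<union> e2" "b \<in> e1 \<union> e2" "phi n s a = phi n s b"
      then show "a = b" using phi_inj s1 gt by (metis less_irrefl)
    qed
    then have "e1 = e2" using im inj_on_image_eq_iff[of "phi n s" "e1 \<union> e2" e1 e2] by blast
    then show ?thesis by simp
  next
    case eq
    have v1: "e1 = Vs (n,i1,j1)" using f1(2) d1 eq by (auto simp: pe_R simp del: Vs_simp Rs_simp)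
    have v2: "e2 = Vs (n,i2,j2)" using f2(2) d2 eq mm by (auto simp: pe_R simp del: Vs_simp Rs_simp)
    have "d = Vs (n,0,j1)" "d = Vs (n,0,j2)" using d1 d2 v1 v2 by (auto simp: pe_V simp del: Vs_simp)
    then have "Vs (n,0,j1) = Vs (n,0,j2)" by (simp del: Vs_simp)
    then have "(n,0,j1) = (n,0,j2)" using Vs_inj by blast
    then have "j1 = j2" by simp
    then show ?thesis using v1 v2 by blast
  next
    case lt
    show ?thesis
    proof (cases "e1 = Vs (m1,i1,j1)")
      case V1: True
      obtain t1 where t1: "d = Vs (m1,i1,t1)" "LL m1 * j1 \<le> t1" "t1 < LL m1 * j1 + LL m1"
        using d1 V1 lt by (auto simp: pe_V simp del: Vs_simp)
      show ?thesis
      proof (cases "e2 = Vs (m2,i2,j2)")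
        case True
        obtain t2 where t2: "d = Vs (m1,i2,t2)" "LL m1 * j2 \<le> t2" "t2 < LL m1 * j2 + LL m1"
          using d2 True lt mm by (auto simp: pe_V simp del: Vs_simp)
        have "Vs (m1,i1,t1) = Vs (m1,i2,t2)" using t1(1) t2(1) by (simp del: Vs_simp)
        then have "(m1,i1,t1) = (m1,i2,t2)" using Vs_inj by blast
        then have "i1 = i2" "t1 = t2" by simp_all
        then have "j1 = j2" using div_eq[OF LLp t1(2) t1(3)] div_eq[OF LLp t2(2) t2(3)] by simp
        then show ?thesis using V1 True mm \<open>i1 = i2\<close> by simp
      next
        case False
        then have "e2 = Rs (m2,i2,j2)" using f2(2) by blast
        then have "d = Rs (m1,i2,LL m1 * j2)" using d2 lt mm by (auto simp: pe_R simp del: Rs_simp)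
        then show ?thesis using t1(1) Vs_Rs by metis
      qed
    next
      case R1: False
      then have R1': "e1 = Rs (m1,i1,j1)" using f1(2) by blast
      then have dR: "d = Rs (m1,i1,LL m1 * j1)" using d1 lt by (auto simp: pe_R simp del: Rs_simp)
      show ?thesis
      proof (cases "e2 = Vs (m2,i2,j2)")
        case True
        then obtain t2 where "d = Vs (m1,i2,t2)"
          using d2 lt mm by (auto simp: pe_V simp del: Vs_simp)
        then show ?thesis using dR Vs_Rs by metis
      next
        case False
        then have "e2 = Rs (m2,i2,j2)" using f2(2) by blast
        then have "d = Rs (m1,i2,LL m1 * j2)" using d2 lt mm by (auto simp: pe_R simp del: Rs_simp)
        then have "Rs (m1,i1,LL m1 * j1) = Rs (m1,i2,LL m1 * j2)" using dR by (simp del: Rs_simp)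
        then have "(m1,i1,LL m1 * j1) = (m1,i2,LL m1 * j2)" using Rs_inj by blast
        then have "i1 = i2" "LL m1 * j1 = LL m1 * j2" by simp_all
        then have "j1 = j2" using LLp by simp
        then show ?thesis using R1' \<open>e2 = Rs (m2,i2,j2)\<close> mm \<open>i1 = i2\<close> by simp
      qed
    qed
  qed
qed


lemma Vs_E_i: "Vs (m,i,j) \<in> E \<Longrightarrow> i < f m"
proof -
  assume a: "Vs (m,i,j) \<in> E"
  obtain m' i' j' where "(Vs (m,i,j) = Vs (m',i',j') \<and> i' < f m') \<or> Vs (m,i,j) = Rs (m',i',j')"
    using E_form[OF a] by blast
  then show ?thesis using Vs_inj Vs_Rs by blast
qed

lemma congest: "card {e \<in> E. d \<in> path_edges (Pw n s e)} \<le> f n"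
proof (cases "{e \<in> E. d \<in> path_edges (Pw n s e)} = {}")
  case True
  then show ?thesis by (simp only: card.empty)
next
  case False
  then obtain e0 where e0: "e0 \<in> E" "d \<in> path_edges (Pw n s e0)" by blast
  show ?thesis
  proof (cases "\<exists>i0 j0. e0 = Vs (n,i0,j0)")
    case True
    then obtain i0 j0 where ij: "e0 = Vs (n,i0,j0)" by blast
    have "{e \<in> E. d \<in> path_edges (Pw n s e)} \<subseteq> (\<lambda>i. Vs (n,i,j0)) ` {..<f n}"
    proof
      fix e assume "e \<in> {e \<in> E. d \<in> path_edges (Pw n s e)}"
      then have e: "e \<in> E" "d \<in> path_edges (Pw n s e)" by auto
      from pe_same[OF e(1) e0(1) e(2) e0(2)]
      show "e \<in> (\<lambda>i. Vs (n,i,j0)) ` {..<f n}"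
      proof
        assume "e = e0"
        then show ?thesis using ij e(1) Vs_E_i by blast
      next
        assume "\<exists>i1 i2 j. e = Vs (n,i1,j) \<and> e0 = Vs (n,i2,j)"
        then obtain i1 i2 j where h: "e = Vs (n,i1,j)" "e0 = Vs (n,i2,j)" by blast
        have "(n,i2,j) = (n,i0,j0)" using h(2) ij Vs_inj by metis
        then show ?thesis using h(1) e(1) Vs_E_i by blast
      qed
    qed
    then have "card {e \<in> E. d \<in> path_edges (Pw n s e)} \<le> card ((\<lambda>i. Vs (n,i,j0)) ` {..<f n})"
      by (rule card_mono[rotated]) simp
    also have "... \<le> card {..<f n}" by (rule card_image_le) simp
    finally show ?thesis by simp
  next
    case nV: False
    have "{e \<in> E. d \<in> path_edges (Pw n s e)} \<subseteq> {e0}"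
    proof
      fix e assume "e \<in> {e \<in> E. d \<in> path_edges (Pw n s e)}"
      then have e: "e \<in> E" "d \<in> path_edges (Pw n s e)" by auto
      from pe_same[OF e(1) e0(1) e(2) e0(2)] nV show "e \<in> {e0}" by blast
    qed
    then have "card {e \<in> E. d \<in> path_edges (Pw n s e)} \<le> card {e0}" by (rule card_mono[rotated]) simp
    then show ?thesis using fn2 by simp
  qed
qed

definition Kb where "Kb = LL (n - 1) * LL (n - 1)"
definition Box where "Box = {..<n} \<times> {..<n} \<times> {..Kb * n}"

lemma in_box: assumes "m < n" "1 \<le> m" "i < f m" "t \<le> LL m * LL m * f m" shows "(m,i,t) \<in> Box"
proof -
  have "f m \<le> m" using fm_le assms(2) by simp
  then have fmn: "f m \<le> n" using assms(1) by simp
  have "LL m \<le> LL (n-1)" using assms(1) by (intro LL_mono) simp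
  then have "LL m * LL m \<le> Kb" unfolding Kb_def by (intro mult_le_mono) simp_all
  then have "LL m * LL m * f m \<le> Kb * n" using fmn by (intro mult_le_mono)
  then show ?thesis unfolding Box_def using assms \<open>f m \<le> m\<close> by auto
qed

lemma set_P: assumes e: "e \<in> E" shows "set (Pw n s e) \<subseteq> phi n s ` V \<union> Box"
proof -
  have eV: "e \<subseteq> V" using EV e by blast
  obtain m i j where f1: "1 \<le> m"
    "(e = Vs (m,i,j) \<and> i < f m \<and> j < LL m * f m) \<or> (e = Rs (m,i,j) \<and> i + 1 < f m \<and> j \<le> LL m * f m \<and> LL m dvd j)"
    using E_form[OF e] by blast
  show ?thesis
  proof (cases "m < n")
    case lt: True
    have "set (Pw n s e) \<subseteq> Box"
      using f1(2)
    proof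
      assume h: "e = Vs (m,i,j) \<and> i < f m \<and> j < LL m * f m"
      have "j + 1 \<le> LL m * f m" using h by simp
      then have b0: "LL m * (j+1) \<le> LL m * (LL m * f m)" by (rule mult_le_mono2)
      then have b: "LL m * j + LL m \<le> LL m * LL m * f m" by (simp add: mult.assoc algebra_simps)
      have "Pw n s e = col m i (LL m * j) (LL m)" using h lt by (simp add: Pw_V vp_def del: Vs_simp)
      then show ?thesis using b h f1(1) lt by (auto simp: set_col intro!: in_box)
    next
      assume h: "e = Rs (m,i,j) \<and> i + 1 < f m \<and> j \<le> LL m * f m \<and> LL m dvd j"
      have b0: "LL m * j \<le> LL m * (LL m * f m)" using h by (intro mult_le_mono2) simp
      then have b: "LL m * j \<le> LL m * LL m * f m" by (simp only: mult.assoc)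
      have "Pw n s e = [(m,i,LL m * j),(m,i+1,LL m * j)]" using h lt by (simp add: Pw_R rp_def del: Rs_simp)
      then show ?thesis using b h f1(1) lt by (auto intro!: in_box)
    qed
    then show ?thesis by blast
  next
    case False
    have "set (Pw n s e) \<subseteq> phi n s ` e"
      using f1(2)
    proof
      assume h: "e = Vs (m,i,j) \<and> i < f m \<and> j < LL m * f m"
      then have "set (Pw n s e) \<subseteq> {phi n s (m,i,j), phi n s (m,i,j+1)}" using False
        by (auto simp: Pw_V vp_def phi_simp simp del: Vs_simp)
      then show ?thesis using h by auto
    next
      assume h: "e = Rs (m,i,j) \<and> i + 1 < f m \<and> j \<le> LL m * f m \<and> LL m dvd j"
      then have "set (Pw n s e) \<subseteq> {phi n s (m,i,j), phi n s (m,i+1,j)}" using False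
        by (auto simp: Pw_R rp_def phi_simp simp del: Rs_simp)
      then show ?thesis using h by auto
    qed
    then show ?thesis using eV by blast
  qed
qed

lemma card_Box: "card Box = n * (n * (Kb * n + 1))"
  unfolding Box_def by (simp add: card_cartesian_product)

end

lemma arith1: assumes "(n::nat)^3 \<le> K" "2 \<le> F" "1 \<le> n" shows "n * (n * (K * n + 1)) \<le> F * (K * K * F + 1)"
proof -
  have n2: "n * n \<le> n^3" using assms(3) by (simp add: power3_eq_cube)
  have "n * (n * (K * n + 1)) = K * n^3 + n * n" by (simp add: power3_eq_cube algebra_simps)
  also have "... \<le> K * K + K" using assms(1) n2 by (intro add_mono mult_le_mono) simp_all
  also have "... \<le> K * K + K * K"
  proof -
    have "1 \<le> K" using assms(1,3) by (metis le_trans one_le_power)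
    then show ?thesis by simp
  qed
  also have "... \<le> (K * K) * (F * F)"
  proof -
    have "2 * 2 \<le> F * F" using assms(2) by (intro mult_le_mono) simp_all
    then have a: "(K*K) * 4 \<le> (K*K) * (F*F)" by (intro mult_le_mono2) simp
    have b: "K*K + K*K \<le> (K*K) * 4" by simp
    from a b show ?thesis by linarith
  qed
  also have "... \<le> F * (K * K * F + 1)" by (simp add: algebra_simps)
  finally show ?thesis .
qed

lemma arith2: assumes "2 \<le> (A::nat)" shows "A * (A * A + 1) + 1 < A * A * (A * A)"
proof -
  have "A * A * (A * A) = A * (A * A * A)" by (simp add: algebra_simps)
  have "2 * (A*A*A) \<le> A * (A*A*A)" using assms by (intro mult_le_mono1)
  moreover have "4 * A \<le> A * A * A"
  proof -
    have "2 * 2 \<le> A * A" using assms by (intro mult_le_mono) simp_all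
    then have "4 * A \<le> (A * A) * A" by (intro mult_le_mono1) simp
    then show ?thesis by simp
  qed
  moreover have "A * (A * A + 1) = A*A*A + A" by (simp add: algebra_simps)
  ultimately show ?thesis using assms \<open>A * A * (A * A) = A * (A * A * A)\<close> by linarith
qed

lemma N_small: assumes "2 \<le> n" "f n \<le> n" "n < m" shows "f n * (LL n * f n + 1) < LL m - 1"
proof -
  define A where "A = LL n"
  have A2: "2 \<le> A" unfolding A_def by (rule LL_ge)
  have nA: "n \<le> A" unfolding A_def by (rule n_le_LL)
  have "f n * (LL n * f n + 1) \<le> A * (A * A + 1)"
    unfolding A_def[symmetric] using assms(2) nA
    by (intro mult_le_mono add_le_mono1) (simp_all add: le_trans)
  moreover have "LL (Suc n) \<le> LL m" using assms(3) by (intro LL_mono) simp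
  moreover have "LL (Suc n) = A * A * (A * A)" unfolding A_def by (rule LL_suc)
  ultimately show ?thesis using arith2[OF A2] by linarith
qed

lemma gap_exists: assumes "finite V" "card V < LL m - 1"
  shows "\<exists>t. 0 < t \<and> t < LL m \<and> (\<forall>i. (m,i,q*LL m + t) \<notin> V)"
proof (rule ccontr)
  assume "\<not> ?thesis"
  then have h: "\<forall>t. 0 < t \<and> t < LL m \<longrightarrow> (\<exists>i. (m,i,q*LL m + t) \<in> V)" by blast
  have "{1..<LL m} \<subseteq> (\<lambda>v. snd (snd v) - q * LL m) ` V"
  proof
    fix t assume "t \<in> {1..<LL m}"
    then have "0 < t \<and> t < LL m" by simp
    then obtain i where "(m,i,q*LL m + t) \<in> V" using h by blast
    then show "t \<in> (\<lambda>v. snd (snd v) - q * LL m) ` V" by (intro image_eqI[of _ _ "(m,i,q*LL m + t)"]) simp_all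
  qed
  then have "card {1..<LL m} \<le> card ((\<lambda>v. snd (snd v) - q * LL m) ` V)" using assms(1) by (intro card_mono) simp_all
  also have "... \<le> card V" using assms(1) by (rule card_image_le)
  finally show False using assms(2) by simp
qed


context W begin

lemma main_W: assumes cV: "card V \<le> card (XnV f n)"
  shows "coarse_wiring (f n) (V,E) (Ygraph f) (phi n s) (Pw n s)
     \<and> wiring_volume (V,E) (phi n s) (Pw n s) \<le> 2 * card (XnV f n)"
proof
  show "coarse_wiring (f n) (V,E) (Ygraph f) (phi n s) (Pw n s)"
    unfolding coarse_wiring_def fst_conv snd_conv using wiring_ok fibre congest by blast
next
  have sub: "phi n s ` V \<union> (\<Union>e\<in>E. set (Pw n s e)) \<subseteq> phi n s ` V \<union> Box"
    using set_P by blast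
  have finB: "finite Box" unfolding Box_def by simp
  have "wiring_volume (V,E) (phi n s) (Pw n s) \<le> card (phi n s ` V \<union> Box)"
    unfolding wiring_volume_def fst_conv snd_conv using finV finB sub by (intro card_mono) simp_all
  also have "... \<le> card (phi n s ` V) + card Box" by (rule card_Un_le)
  also have "... \<le> card V + card Box" using card_image_le[OF finV] by simp
  also have "card Box \<le> card (XnV f n)"
  proof -
    have nn: "Suc (n - 1) = n" using n2 by simp
    have c3: "n^3 \<le> Kb" unfolding Kb_def using cube_le[of "n-1"] nn by simp
    have LLn: "LL n = Kb * Kb" unfolding Kb_def using LL_suc[of "n-1"] nn by simp
    show ?thesis unfolding card_Box card_XnV LLn using arith1[OF c3 fn2] n2 by simp
  qed
  then have "card V + card Box \<le> 2 * card (XnV f n)" using cV by simp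
  finally show "wiring_volume (V,E) (phi n s) (Pw n s) \<le> 2 * card (XnV f n)" by simp
qed

end

theorem lemma4p2:
  fixes f :: "nat \<Rightarrow> nat" and n :: nat
  assumes f_one: "f 1 = 1"
    and f_surj: "\<forall>m\<ge>1. \<exists>p\<ge>1. f p = m"
    and f_bounds: "\<forall>p\<ge>2. 2 \<le> f p \<and> f p \<le> p"
    and f_inf: "\<forall>k\<ge>2. infinite {p. p \<ge> 1 \<and> f p = k}"
    and n2: "n \<ge> 2"
  shows "(\<forall>\<Gamma>. finite_subgraph \<Gamma> (Xgraph f) \<and> card (fst \<Gamma>) \<le> card (XnV f n) \<longrightarrow>
            (\<exists>\<phi> P. coarse_wiring (f n) \<Gamma> (Ygraph f) \<phi> P
                   \<and> wiring_volume \<Gamma> \<phi> P \<le> 2 * card (XnV f n)))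
       \<and> wir_fun (f n) (Xgraph f) (Ygraph f) (card (XnV f n)) \<le> enat (2 * card (XnV f n))"
proof -
  have part1: "\<exists>\<phi> P. coarse_wiring (f n) \<Gamma> (Ygraph f) \<phi> P \<and> wiring_volume \<Gamma> \<phi> P \<le> 2 * card (XnV f n)"
    if G: "finite_subgraph \<Gamma> (Xgraph f)" "card (fst \<Gamma>) \<le> card (XnV f n)" for \<Gamma>
  proof -
    obtain V E where VE: "\<Gamma> = (V,E)" by (cases \<Gamma>)
    have fs: "finite V" "V \<subseteq> fst (Xgraph f)" "E \<subseteq> snd (Xgraph f)" "\<forall>e\<in>E. e \<subseteq> V"
      using G(1) unfolding VE finite_subgraph_def by auto
    have cV: "card V \<le> card (XnV f n)" using G(2) VE by simp
    define s where "s = (\<lambda>m q. SOME t. 0 < t \<and> t < LL m \<and> (\<forall>i. (m,i,q*LL m + t) \<notin> V))"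
    have gap: "0 < s m q \<and> s m q < LL m \<and> (\<forall>i. (m,i,q*LL m + s m q) \<notin> V)" if "n < m" for m q
    proof -
      have "f n \<le> n" using f_bounds n2 by auto
      then have "card (XnV f n) < LL m - 1" unfolding card_XnV using N_small n2 that by blast
      then have "card V < LL m - 1" using cV by simp
      then have "\<exists>t. 0 < t \<and> t < LL m \<and> (\<forall>i. (m,i,q*LL m + t) \<notin> V)" using gap_exists fs(1) by blast
      then show ?thesis unfolding s_def by (rule someI_ex)
    qed
    interpret W f n V E s
      by unfold_locales (use f_one f_bounds n2 fs gap in auto)
    show ?thesis unfolding VE using main_W[OF cV] by blast
  qed
  moreover have "wir_fun (f n) (Xgraph f) (Ygraph f) (card (XnV f n)) \<le> enat (2 * card (XnV f n))"
    unfolding wir_fun_def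
  proof (rule Sup_least)
    fix x assume "x \<in> {wir (f n) \<Gamma> (Ygraph f) |\<Gamma>. finite_subgraph \<Gamma> (Xgraph f) \<and> card (fst \<Gamma>) \<le> card (XnV f n)}"
    then obtain \<Gamma> where x: "x = wir (f n) \<Gamma> (Ygraph f)" "finite_subgraph \<Gamma> (Xgraph f)" "card (fst \<Gamma>) \<le> card (XnV f n)"
      by blast
    obtain \<phi> P where w: "coarse_wiring (f n) \<Gamma> (Ygraph f) \<phi> P" "wiring_volume \<Gamma> \<phi> P \<le> 2 * card (XnV f n)"
      using part1[OF x(2,3)] by blast
    have "x \<le> enat (wiring_volume \<Gamma> \<phi> P)" unfolding x(1) wir_def
      by (rule Inf_lower) (use w(1) in blast)
    also have "... \<le> enat (2 * card (XnV f n))" using w(2) by simp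
    finally show "x \<le> enat (2 * card (XnV f n))" .
  qed
  ultimately show ?thesis by blast
qed


end
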